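(* If $G$ is a finite group of isometries of the rooted tree $\mathcal T$, then its centralizer $C_W(G)$ in $W=\mathrm{Aut}(\mathcal T)$ is uncountable.
   Context: $\mathcal T=X^*$ is the $d$-regular rooted tree over a finite alphabet $X$ with $d=|X|\ge2$, and $W$ its group of isometries. *)

theory Defs
  imports Main "HOL-Library.Countable_Set" "HOL-Library.Cardinality"
begin

text \<open>The tree X* : vertices are words (lists) over the alphabet 'a; edges join
  a word u with u @ [x].\<close>

definition tree_adj :: "'a list \<Rightarrow> 'a list \<Rightarrow> bool" where
  "tree_adj u v \<longleftrightarrow> (\<exists>x. v = u @ [x]) \<or> (\<exists>x. u = v @ [x])"

definition tree_isometries :: "('a list \<Rightarrow> 'a list) set" where
  "tree_isometries = {f. bij f \<and> (\<forall>u v. tree_adj u v \<longleftrightarrow> tree_adj (f u) (f v))}"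

definition centralizer_W :: "('a list \<Rightarrow> 'a list) set \<Rightarrow> ('a list \<Rightarrow> 'a list) set" where
  "centralizer_W G = {f \<in> tree_isometries. \<forall>g\<in>G. f \<circ> g = g \<circ> f}"

end

theory Submission
  imports Defs
begin

lemma iso_bij: "f \<in> tree_isometries \<Longrightarrow> bij f"
  by (simp add: tree_isometries_def)

lemma iso_adj: "f \<in> tree_isometries \<Longrightarrow> tree_adj u v \<longleftrightarrow> tree_adj (f u) (f v)"
  by (simp add: tree_isometries_def)

lemma nb_root: "{u'. tree_adj [] u'} = range (\<lambda>x. [x])"
  by (auto simp: tree_adj_def)

lemma nb_snoc: "{u'. tree_adj (p@[z]) u'} = insert p (range (\<lambda>x. p@[z,x]))"
  by (auto simp: tree_adj_def)

lemma card_nb_root: "card {u'. tree_adj [] (u'::'a::finite list)} = CARD('a)"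
  unfolding nb_root by (subst card_image) (auto simp: inj_on_def)

lemma card_nb_snoc: "card {u'. tree_adj (p@[z]) (u'::'a::finite list)} = Suc CARD('a)"
  unfolding nb_snoc
  apply (subst card_insert_disjoint)
  apply simp
  apply force
  by (subst card_image) (auto simp: inj_on_def)

lemma iso_nb: assumes "f \<in> tree_isometries"
  shows "card {u'. tree_adj (f u) u'} = card {u'. tree_adj u u'}"
proof -
  have b: "bij f" using assms by (rule iso_bij)
  have "f ` {u'. tree_adj u u'} = {u'. tree_adj (f u) u'}"
  proof
    show "f ` {u'. tree_adj u u'} \<subseteq> {u'. tree_adj (f u) u'}" using iso_adj[OF assms] by auto
    show "{u'. tree_adj (f u) u'} \<subseteq> f ` {u'. tree_adj u u'}"
    proof
      fix y assume "y \<in> {u'. tree_adj (f u) u'}"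
      moreover have "y = f (inv f y)" using b by (simp add: bij_is_surj surj_f_inv_f)
      ultimately show "y \<in> f ` {u'. tree_adj u u'}" using iso_adj[OF assms, of u "inv f y"] by auto
    qed
  qed
  moreover have "inj_on f {u'. tree_adj u u'}" using b bij_is_inj inj_on_subset by blast
  ultimately show ?thesis by (metis card_image)
qed

lemma iso_root: assumes "f \<in> tree_isometries" shows "f [] = ([]::'a::finite list)"
proof (cases "f []" rule: rev_exhaust)
  case (snoc p z)
  have "card {u'. tree_adj (f []) u'} = Suc CARD('a)" using snoc card_nb_snoc by metis
  then show ?thesis using iso_nb[OF assms, of "[]"] card_nb_root[where 'a='a] by simp
qed simp

lemma iso_child: assumes "f \<in> tree_isometries"
  shows "\<exists>y. f (u@[x]) = f u @ [(y::'a::finite)]"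
proof (induction u arbitrary: x rule: rev_induct)
  case Nil
  have "tree_adj [] [x]" by (simp add: tree_adj_def)
  then have "tree_adj (f []) (f [x])" using iso_adj[OF assms] by blast
  then show ?case using iso_root[OF assms] by (auto simp: tree_adj_def)
next
  case (snoc z u')
  obtain y0 where y0: "f (u'@[z]) = f u' @ [y0]" using snoc by blast
  have "tree_adj (u'@[z]) (u'@[z]@[x])" by (simp add: tree_adj_def)
  then have "tree_adj (f (u'@[z])) (f (u'@[z]@[x]))" using iso_adj[OF assms] by blast
  then consider y where "f (u'@[z]@[x]) = f (u'@[z]) @ [y]" | y where "f (u'@[z]) = f (u'@[z]@[x]) @ [y]"
    by (auto simp: tree_adj_def)
  then show ?case
  proof cases
    case 1 then show ?thesis by auto
  next
    case 2
    then have "f (u'@[z]@[x]) = f u'" using y0 by simp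
    then have "u'@[z]@[x] = u'" using iso_bij[OF assms] by (simp add: bij_is_inj inj_eq)
    then show ?thesis by simp
  qed
qed

lemma iso_len: assumes "f \<in> tree_isometries"
  shows "length (f u) = length (u::'a::finite list)"
proof (induction u rule: rev_induct)
  case Nil then show ?case using iso_root[OF assms] by simp
next
  case (snoc x u) then show ?case using iso_child[OF assms, of u x] by auto
qed

lemma iso_prefix: assumes "f \<in> tree_isometries"
  shows "\<exists>r. f (u@w) = f u @ r \<and> length r = length (w::'a::finite list)"
proof (induction w rule: rev_induct)
  case Nil then show ?case by simp
next
  case (snoc x w)
  then obtain r where r: "f (u@w) = f u @ r" "length r = length w" by blast
  obtain y where "f ((u@w)@[x]) = f (u@w) @ [y]" using iso_child[OF assms] by blast
  then show ?case using r by (intro exI[of _ "r@[y]"]) simp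
qed

lemma iso_prefix_eq: assumes "f \<in> tree_isometries" "f (u@w) = g @ r" "length g = length (u::'a::finite list)"
  shows "f u = g"
  using iso_prefix[OF assms(1), of u w] iso_len[OF assms(1), of u] assms(2,3) by auto

definition swp :: "'a \<Rightarrow> 'a \<Rightarrow> 'a \<Rightarrow> 'a" where
  "swp x0 x1 c = (if c = x0 then x1 else if c = x1 then x0 else c)"

definition aS :: "('a \<Rightarrow> 'a) \<Rightarrow> nat set \<Rightarrow> 'a list \<Rightarrow> 'a list" where
  "aS s S w = map (\<lambda>i. if i \<in> S then s (w!i) else w!i) [0..<length w]"

lemma aS_len[simp]: "length (aS s S w) = length w" by (simp add: aS_def)
lemma aS_nth: "i < length w \<Longrightarrow> aS s S w ! i = (if i \<in> S then s (w!i) else w!i)" by (simp add: aS_def)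
lemma aS_Nil[simp]: "aS s S [] = []" by (simp add: aS_def)
lemma aS_snoc: "\<exists>c. aS s S (w@[x]) = aS s S w @ [c]"
  by (simp add: aS_def nth_append)
lemma aS_inv: "s \<circ> s = id \<Longrightarrow> aS s S (aS s S w) = w"
  by (rule nth_equalityI) (auto simp: aS_nth pointfree_idE)


lemma uncountable_natset: "\<not> countable (UNIV :: nat set set)"
proof
  assume "countable (UNIV :: nat set set)"
  then obtain f :: "nat set \<Rightarrow> nat" where "inj f" by (auto simp: countable_def)
  then have "surj (inv f)" by (simp add: inj_imp_surj_inv)
  then obtain m where "{n. n \<notin> inv f n} = inv f m" by (metis surjD)
  then show False by blast
qed

theorem theorem3p12:
  fixes G :: "('a::finite list \<Rightarrow> 'a list) set"
  assumes "CARD('a) \<ge> 2"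
    and "G \<subseteq> tree_isometries"
    and "finite G"
    and "id \<in> G"
    and "\<And>g h. g \<in> G \<Longrightarrow> h \<in> G \<Longrightarrow> g \<circ> h \<in> G"
    and "\<And>g. g \<in> G \<Longrightarrow> inv g \<in> G"
  shows "\<not> countable (centralizer_W G)"
proof -
  note GI = subsetD[OF assms(2)]
  have "\<exists>x0 x1::'a. x0 \<noteq> x1"
  proof (rule ccontr)
    assume "\<not> ?thesis"
    then have "card (UNIV::'a set) \<le> Suc 0" by (simp add: card_le_Suc0_iff_eq)
    then show False using assms(1) by simp
  qed
  then obtain x0 x1 :: 'a where x01: "x0 \<noteq> x1" by blast
  define s where "s = swp x0 x1"
  have ss: "s \<circ> s = id" by (auto simp: s_def swp_def)
  have sx0: "s x0 \<noteq> x0" using x01 by (simp add: s_def swp_def)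
  define stab where "stab u = {g\<in>G. g u = u}" for u
  obtain v where vmin: "\<forall>u. card (stab v) \<le> card (stab u)"
    using ex_has_least_nat[of "\<lambda>_. True" "[]" "\<lambda>u. card (stab u)"] by auto
  have stab_eq: "stab (v@w) = stab v" for w
  proof -
    have sub: "stab (v@w) \<subseteq> stab v"
      unfolding stab_def using iso_prefix_eq GI by blast
    moreover have "finite (stab v)" using assms(3) by (simp add: stab_def)
    moreover have "card (stab v) \<le> card (stab (v@w))" using vmin by blast
    ultimately show ?thesis using card_subset_eq[of "stab v" "stab (v@w)"] card_mono[of "stab v" "stab (v@w)"] by linarith
  qed
  have wd: "g (v@w) = g' (v@w)" if g: "g \<in> G" "g' \<in> G" "g v = g' v" for g g' w
  proof -
    have ig: "inv g \<in> G" using assms(6) g by blast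
    have bg: "bij g" using iso_bij GI g by blast
    have "inv g \<circ> g' \<in> G" using assms(5) ig g by blast
    moreover have "(inv g \<circ> g') v = v" using g bg by (metis bij_is_inj comp_apply inv_f_f)
    ultimately have "inv g \<circ> g' \<in> stab (v@w)" using stab_eq by (simp add: stab_def)
    then have "inv g (g' (v@w)) = v@w" by (simp add: stab_def)
    then have "g (inv g (g' (v@w))) = g (v@w)" by simp
    then show ?thesis using bg by (simp add: bij_is_surj surj_f_inv_f)
  qed
  have uniq: "w = w' \<and> (\<forall>z. g (v@z) = g' (v@z))"
    if g: "g \<in> G" "g' \<in> G" "g (v@w) = g' (v@w')" for g g' w w'
  proof -
    obtain r where r: "g (v@w) = g v @ r" "length r = length w" using iso_prefix GI g by blast
    have "g' v = g v" using iso_prefix_eq[of g' v w' "g v" r] GI g r iso_len by metis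
    then have e: "\<forall>z. g (v@z) = g' (v@z)" using wd g by metis
    then have "g (v@w') = g (v@w)" using g by simp
    moreover have "inj g" using iso_bij GI g bij_is_inj by blast
    ultimately have "w = w'" by (metis injD same_append_eq)
    then show ?thesis using e by simp
  qed
  define F where "F S u = (if \<exists>g\<in>G. \<exists>w. u = g (v@w)
      then (SOME y. \<exists>g\<in>G. \<exists>w. u = g (v@w) \<and> y = g (v @ aS s S w)) else u)" for S u
  have Fval: "F S (g (v@w)) = g (v @ aS s S w)" if "g \<in> G" for S g w
  proof -
    have "(SOME y. \<exists>g'\<in>G. \<exists>w'. g (v@w) = g' (v@w') \<and> y = g' (v @ aS s S w')) = g (v @ aS s S w)"
    proof (rule someI2)
      show "\<exists>g'\<in>G. \<exists>w'. g (v@w) = g' (v@w') \<and> g (v @ aS s S w) = g' (v @ aS s S w')"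
        using that by blast
    next
      fix y assume "\<exists>g'\<in>G. \<exists>w'. g (v@w) = g' (v@w') \<and> y = g' (v @ aS s S w')"
      then obtain g' w' where "g' \<in> G" "g (v@w) = g' (v@w')" "y = g' (v @ aS s S w')" by blast
      then show "y = g (v @ aS s S w)" using uniq[of g g' w w'] that by metis
    qed
    then show ?thesis unfolding F_def using that by auto
  qed
  have Fout: "F S u = u" if "\<not> (\<exists>g\<in>G. \<exists>w. u = g (v@w))" for S u
    using that unfolding F_def by auto
  have FF: "F S (F S u) = u" for S u
  proof (cases "\<exists>g\<in>G. \<exists>w. u = g (v@w)")
    case True
    then obtain g w where "g \<in> G" "u = g (v@w)" by blast
    then show ?thesis using Fval aS_inv[OF ss] by simp
  next
    case False then show ?thesis using Fout by simp
  qed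
  have Fchild: "\<exists>y. F S (u@[x]) = F S u @ [y]" for S u x
  proof (cases "\<exists>g\<in>G. \<exists>w. u = g (v@w)")
    case True
    then obtain g w where g: "g \<in> G" "u = g (v@w)" by blast
    have ig: "inv g \<in> tree_isometries" using assms(6) g GI by blast
    have bg: "bij g" using iso_bij GI g by blast
    obtain y where y: "inv g (u@[x]) = inv g u @ [y]" using iso_child[OF ig] by blast
    have "inv g u = v@w" using g bg by (simp add: bij_is_inj)
    then have "u@[x] = g (v@w@[y])" using y bg
      by (metis append_assoc bij_is_surj surj_f_inv_f)
    then have "F S (u@[x]) = g (v @ aS s S (w@[y]))" using Fval g by simp
    moreover obtain c where "aS s S (w@[y]) = aS s S w @ [c]" using aS_snoc[of s S w y] by metis
    moreover obtain c' where "g ((v @ aS s S w) @ [c]) = g (v @ aS s S w) @ [c']"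
      using iso_child GI g by blast
    ultimately show ?thesis using Fval g by auto
  next
    case False
    show ?thesis
    proof (cases "\<exists>g\<in>G. \<exists>w. u@[x] = g (v@w)")
      case True
      then obtain g w where g: "g \<in> G" "u@[x] = g (v@w)" by blast
      show ?thesis
      proof (cases w rule: rev_exhaust)
        case Nil
        then show ?thesis using Fval[of g S "[]"] g Fout[OF False] by (metis aS_Nil append_Nil2)
      next
        case (snoc w' z)
        obtain y where "g ((v@w')@[z]) = g (v@w') @ [y]" using iso_child GI g by blast
        then have "u = g (v@w')" using g snoc by simp
        then show ?thesis using False g by blast
      qed
    next
      case False2: False
      then show ?thesis using Fout[OF False2] Fout[OF False] by simp
    qed
  qed
  have Fcomm: "F S \<circ> k = k \<circ> F S" if k: "k \<in> G" for S k
  proof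
    fix u
    show "(F S \<circ> k) u = (k \<circ> F S) u"
    proof (cases "\<exists>g\<in>G. \<exists>w. u = g (v@w)")
      case True
      then obtain g w where g: "g \<in> G" "u = g (v@w)" by blast
      have "k u = (k \<circ> g) (v@w)" using g by simp
      moreover have "k \<circ> g \<in> G" using assms(5) k g by blast
      ultimately show ?thesis using Fval[of "k \<circ> g" S w] Fval[of g S w] g by simp
    next
      case False
      have "\<not> (\<exists>g\<in>G. \<exists>w. k u = g (v@w))"
      proof
        assume "\<exists>g\<in>G. \<exists>w. k u = g (v@w)"
        then obtain g w where g: "g \<in> G" "k u = g (v@w)" by blast
        have "inv k \<circ> g \<in> G" using assms(5,6) k g by blast
        moreover have "u = (inv k \<circ> g) (v@w)" using g k iso_bij GI
          by (metis bij_is_inj comp_apply inv_f_f)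
        ultimately show False using False by blast
      qed
      then show ?thesis using Fout False by simp
    qed
  qed
  have Fiso: "F S \<in> tree_isometries" for S
  proof -
    have "bij (F S)" by (metis FF bij_betw_byWitness subset_UNIV surj_def UNIV_I image_subsetI)
    moreover have fwd: "tree_adj a b \<Longrightarrow> tree_adj (F S a) (F S b)" for a b
      unfolding tree_adj_def using Fchild by metis
    moreover have "tree_adj (F S a) (F S b) \<Longrightarrow> tree_adj a b" for a b
      using fwd[of "F S a" "F S b"] FF by simp
    ultimately show ?thesis unfolding tree_isometries_def by blast
  qed
  have Finj: "inj F"
  proof
    fix S S' assume eq: "F S = F S'"
    show "S = S'"
    proof (rule ccontr)
      assume "S \<noteq> S'"
      then obtain i where i: "(i \<in> S) \<noteq> (i \<in> S')" by blast
      define w where "w = replicate (Suc i) x0"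
      have "F S (id (v@w)) = F S' (id (v@w))" using eq by simp
      then have "v @ aS s S w = v @ aS s S' w" using Fval[OF assms(4), of S w] Fval[OF assms(4), of S' w] by simp
      then have "aS s S w ! i = aS s S' w ! i" by simp
      moreover have "w ! i = x0" by (simp add: w_def del: replicate_Suc)
      ultimately show False using i sx0 by (auto simp: aS_nth w_def simp del: replicate_Suc)
    qed
  qed
  have "range F \<subseteq> centralizer_W G"
    unfolding centralizer_W_def using Fiso Fcomm by blast
  then show ?thesis
    using uncountable_natset countable_image_inj_on[OF _ Finj] countable_subset by blast
qed

end
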